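(* Let $X$ be a metric space, let $A\subseteq X$ be nonempty and let $Y$ be a hyperconvex metric space. Let $\Phi_c:\mathcal{N}(A,Y)\to\mathcal{P}(\mathcal{N}(X,Y))$ assign to each $f$ the set of all $f'\in\mathcal{N}(X,Y)$ with $f'|_A=f$ and $f'(X)\subseteq\mathrm{cov}(f(A))$. Then $\Phi_c$ is a nonexpansive multivalued mapping, i.e. $\Phi_c(f)\neq\emptyset$ and $H(\Phi_c(f),\Phi_c(g))\le d_\infty(f,g)$ for all $f,g\in\mathcal{N}(A,Y)$.
   Context: A metric space $Y$ is hyperconvex if $\bigcap_\alpha B(x_\alpha,r_\alpha)\ne\emptyset$ for every family of points $x_\alpha\in Y$ and $r_\alpha>0$ with $d(x_\alpha,x_\beta)\le r_\alpha+r_\beta$ ($B$ = closed ball). For a nonempty bounded $D\subseteq Y$, the admissible hull $\mathrm{cov}(D)$ is the intersection of all closed balls containing $D$, equivalently $\bigcap_{y\in Y}B(y,r_y(D))$ with $r_y(D)=\sup_{a\in D}d(y,a)$. $\mathcal{N}(A,Y)$ is the set of bounded nonexpansive maps $A\to Y$ with the supremum metric $d_\infty$; $H$ is the Pompeiu–Hausdorff distance in $(\mathcal{N}(X,Y),d_\infty)$. *)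

theory Defs
  imports "HOL-Analysis.Analysis"
begin

text \<open>Hyperconvexity of a metric space (here: a subset Y of a metric type, used with Y = UNIV).
  A family of closed balls is given as a set F of (centre, radius) pairs.\<close>
definition hyperconvex :: "'b::metric_space set \<Rightarrow> bool" where
  "hyperconvex Y \<longleftrightarrow>
     (\<forall>F. F \<subseteq> Y \<times> {0<..} \<longrightarrow>
        (\<forall>(x,r)\<in>F. \<forall>(y,s)\<in>F. dist x y \<le> r + s) \<longrightarrow>
        Y \<inter> (\<Inter>(x,r)\<in>F. cball x r) \<noteq> {})"

definition admissible_hull :: "'b::metric_space set \<Rightarrow> 'b set \<Rightarrow> 'b set" where
  "admissible_hull Y D = Y \<inter> \<Inter>{cball y r | y r. y \<in> Y \<and> D \<subseteq> cball y r}"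

text \<open>Bounded nonexpansive maps S \<rightarrow> Y (only values on S matter).\<close>
definition nonexp_maps :: "'a::metric_space set \<Rightarrow> 'b::metric_space set \<Rightarrow> ('a \<Rightarrow> 'b) set" where
  "nonexp_maps S Y = {f. f ` S \<subseteq> Y \<and> (\<forall>x\<in>S. \<forall>y\<in>S. dist (f x) (f y) \<le> dist x y) \<and> bounded (f ` S)}"

definition sup_dist :: "'a set \<Rightarrow> ('a \<Rightarrow> 'b::metric_space) \<Rightarrow> ('a \<Rightarrow> 'b) \<Rightarrow> real" where
  "sup_dist S f g = (SUP x\<in>S. dist (f x) (g x))"

definition haus_dist :: "'a set \<Rightarrow> ('a \<Rightarrow> 'b::metric_space) set \<Rightarrow> ('a \<Rightarrow> 'b) set \<Rightarrow> ereal" where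
  "haus_dist S P Q = max (SUP p\<in>P. INF q\<in>Q. ereal (sup_dist S p q))
                         (SUP q\<in>Q. INF p\<in>P. ereal (sup_dist S p q))"

definition Phi_c :: "'a::metric_space set \<Rightarrow> 'a set \<Rightarrow> 'b::metric_space set \<Rightarrow> ('a \<Rightarrow> 'b) \<Rightarrow> ('a \<Rightarrow> 'b) set" where
  "Phi_c X A Y f = {f' \<in> nonexp_maps X Y. (\<forall>x\<in>A. f' x = f x) \<and> f' ` X \<subseteq> admissible_hull Y (f ` A)}"

end

theory Submission
  imports Defs
begin


lemma hc0:
  fixes F :: "('b::metric_space \<times> real) set"
  assumes hc: "hyperconvex (UNIV::'b set)"
  and nn: "\<forall>(c,r)\<in>F. r \<ge> 0"
  and pw: "\<forall>(c,r)\<in>F. \<forall>(c',r')\<in>F. dist c c' \<le> r + r'"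
  shows "\<exists>z. \<forall>(c,r)\<in>F. dist z c \<le> r"
proof (cases "\<exists>c. (c,0) \<in> F")
  case True
  then obtain c where c: "(c,0)\<in>F" by blast
  show ?thesis
  proof (intro exI ballI, clarify)
    fix c' r' assume "(c',r')\<in>F"
    then show "dist c c' \<le> r'" using pw c by fastforce
  qed
next
  case False
  have "F \<subseteq> UNIV \<times> {0<..}"
  proof
    fix p assume "p\<in>F"
    moreover obtain c r where "p = (c,r)" by fastforce
    ultimately show "p \<in> UNIV \<times> {0<..}" using nn False
      by (cases "r = 0") force+
  qed
  with hc pw have "UNIV \<inter> (\<Inter>(x,r)\<in>F. cball x r) \<noteq> {}"
    unfolding hyperconvex_def by blast
  then obtain z where "\<forall>(x,r)\<in>F. z \<in> cball x r" by blast
  then have "\<forall>(x,r)\<in>F. dist z x \<le> r" by (auto simp: dist_commute)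
  then show ?thesis by blast
qed

lemma ext:
  fixes A :: "'a::metric_space set" and f :: "'a \<Rightarrow> 'b::metric_space"
    and B :: "'a \<Rightarrow> ('b \<times> real) set"
  assumes hc: "hyperconvex (UNIV::'b set)"
  and ne: "\<forall>x\<in>A. \<forall>y\<in>A. dist (f x) (f y) \<le> dist x y"
  and Bnn: "\<forall>x. \<forall>(c,r)\<in>B x. r \<ge> 0"
  and Bpair: "\<forall>x. \<forall>(c,r)\<in>B x. \<forall>(c',r')\<in>B x. dist c c' \<le> r + r'"
  and Bcomp: "\<forall>x a y. (\<forall>(c,r)\<in>B a. dist y c \<le> r) \<longrightarrow> (\<forall>(c,r)\<in>B x. dist y c \<le> dist x a + r)"
  and Binit: "\<forall>a\<in>A. \<forall>(c,r)\<in>B a. dist (f a) c \<le> r"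
  shows "\<exists>h. (\<forall>x\<in>A. h x = f x) \<and> (\<forall>x y. dist (h x) (h y) \<le> dist x y)
            \<and> (\<forall>x. \<forall>(c,r)\<in>B x. dist (h x) c \<le> r)"
proof -
  define G0 where "G0 = (\<lambda>a. (a, f a)) ` A"
  define S where "S = {G. G0 \<subseteq> G \<and> (\<forall>(x,y)\<in>G. \<forall>(c,r)\<in>B x. dist y c \<le> r)
      \<and> (\<forall>(x,y)\<in>G. \<forall>(x',y')\<in>G. dist y y' \<le> dist x x')}"
  have G0S: "G0 \<in> S" using ne Binit unfolding S_def G0_def by auto
  have "\<forall>C\<in>chains S. \<exists>U\<in>S. \<forall>X\<in>C. X \<subseteq> U"
  proof
    fix C assume C: "C \<in> chains S"
    show "\<exists>U\<in>S. \<forall>X\<in>C. X \<subseteq> U"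
    proof (cases "C = {}")
      case True then show ?thesis using G0S by blast
    next
      case False
      have CS: "C \<subseteq> S" and ch: "\<forall>X\<in>C. \<forall>Y\<in>C. X \<subseteq> Y \<or> Y \<subseteq> X"
        using C unfolding chains_def chain_subset_def by auto
      have "\<Union>C \<in> S"
        unfolding S_def
      proof (intro CollectI conjI)
        show "G0 \<subseteq> \<Union>C" using False CS unfolding S_def by blast
        show "\<forall>(x,y)\<in>\<Union>C. \<forall>(c,r)\<in>B x. dist y c \<le> r" using CS unfolding S_def by blast
        show "\<forall>(x,y)\<in>\<Union>C. \<forall>(x',y')\<in>\<Union>C. dist y y' \<le> dist x x'"
        proof (clarify)
          fix x y x' y' X X' assume a: "(x,y)\<in>X" "X\<in>C" "(x',y')\<in>X'" "X'\<in>C"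
          show "dist y y' \<le> dist x x'"
          proof (cases "X \<subseteq> X'")
            case True then show ?thesis using a CS unfolding S_def by blast
          next
            case False then have "X' \<subseteq> X" using ch a by blast
            then show ?thesis using a CS unfolding S_def by blast
          qed
        qed
      qed
      then show ?thesis by blast
    qed
  qed
  from Zorn_Lemma2[OF this] obtain M where MS: "M \<in> S" and max: "\<forall>X\<in>S. M \<subseteq> X \<longrightarrow> X = M" by blast
  have M0: "G0 \<subseteq> M" and Mc: "\<forall>(x,y)\<in>M. \<forall>(c,r)\<in>B x. dist y c \<le> r"
    and Mn: "\<forall>(x,y)\<in>M. \<forall>(x',y')\<in>M. dist y y' \<le> dist x x'" using MS unfolding S_def by auto
  have dom: "\<exists>y. (x,y)\<in>M" for x
  proof (rule ccontr)
    assume nx: "\<not> (\<exists>y. (x,y)\<in>M)"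
    define F where "F = (\<lambda>(a,y). (y, dist x a)) ` M \<union> B x"
    have "\<exists>z. \<forall>(c,r)\<in>F. dist z c \<le> r"
    proof (rule hc0[OF hc])
      show "\<forall>(c,r)\<in>F. r \<ge> 0" using Bnn unfolding F_def by auto
      show "\<forall>(c,r)\<in>F. \<forall>(c',r')\<in>F. dist c c' \<le> r + r'"
      proof clarify
        fix c r c' r' assume cr: "(c,r)\<in>F" and cr': "(c',r')\<in>F"
        show "dist c c' \<le> r + r'"
        proof (cases "(c,r) \<in> B x")
          case True note T1 = True
          show ?thesis
          proof (cases "(c',r') \<in> B x")
            case True then show ?thesis using T1 Bpair by fast
          next
            case False
            then obtain a where a: "(a,c')\<in>M" "r' = dist x a" using cr' unfolding F_def by auto
            have "\<forall>(c,r)\<in>B a. dist c' c \<le> r" using Mc a by blast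
            then have "dist c' c \<le> dist x a + r" using Bcomp T1 by fast
            then show ?thesis using a by (simp add: dist_commute)
          qed
        next
          case False
          then obtain a where a: "(a,c)\<in>M" "r = dist x a" using cr unfolding F_def by auto
          show ?thesis
          proof (cases "(c',r') \<in> B x")
            case True
            have "\<forall>(c,r)\<in>B a. dist c c \<le> r \<or> True" by simp
            have "\<forall>(cc,rr)\<in>B a. dist c cc \<le> rr" using Mc a by blast
            then have "dist c c' \<le> dist x a + r'" using Bcomp True by fast
            then show ?thesis using a by simp
          next
            case False
            then obtain a' where a': "(a',c')\<in>M" "r' = dist x a'" using cr' unfolding F_def by auto
            have "dist c c' \<le> dist a a'" using Mn a a' by fast
            also have "\<dots> \<le> dist x a + dist x a'" by (metis dist_commute dist_triangle)
            finally show ?thesis using a a' by simp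
          qed
        qed
      qed
    qed
    then obtain z where z: "\<forall>(c,r)\<in>F. dist z c \<le> r" by blast
    have "insert (x,z) M \<in> S"
      unfolding S_def
    proof (intro CollectI conjI)
      show "G0 \<subseteq> insert (x,z) M" using M0 by blast
      show "\<forall>(x,y)\<in>insert (x,z) M. \<forall>(c,r)\<in>B x. dist y c \<le> r" using Mc z unfolding F_def by auto
      have zM: "dist z y \<le> dist x a" if "(a,y)\<in>M" for a y
        using z that unfolding F_def by force
      show "\<forall>(x1,y)\<in>insert (x,z) M. \<forall>(x',y')\<in>insert (x,z) M. dist y y' \<le> dist x1 x'"
        using Mn zM by (auto simp: dist_commute)
    qed
    with max have "insert (x,z) M = M" by blast
    with nx show False by blast
  qed
  define h where "h x = (SOME y. (x,y)\<in>M)" for x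
  have hM: "(x, h x) \<in> M" for x unfolding h_def using dom someI_ex by metis
  have c1: "\<forall>x\<in>A. h x = f x"
  proof
    fix x assume "x \<in> A"
    then have "(x, f x) \<in> M" using M0 unfolding G0_def by blast
    then have "dist (h x) (f x) \<le> dist x x" using Mn hM by fast
    then show "h x = f x" by simp
  qed
  have c2: "\<forall>x y. dist (h x) (h y) \<le> dist x y" using Mn hM by fast
  have c3: "\<forall>x. \<forall>(c,r)\<in>B x. dist (h x) c \<le> r"
  proof (intro allI ballI)
    fix x p assume "p \<in> B x"
    with Mc hM[of x] show "case p of (c,r) \<Rightarrow> dist (h x) c \<le> r" by fastforce
  qed
  show ?thesis by (intro exI[of _ h] conjI c1 c2 c3)
qed


lemma hull_iff:
  "z \<in> admissible_hull UNIV D \<longleftrightarrow> (\<forall>y r. D \<subseteq> cball y r \<longrightarrow> dist z y \<le> r)"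
proof
  assume "z \<in> admissible_hull UNIV D"
  then have "\<forall>y r. D \<subseteq> cball y r \<longrightarrow> z \<in> cball y r" unfolding admissible_hull_def by blast
  then show "\<forall>y r. D \<subseteq> cball y r \<longrightarrow> dist z y \<le> r" by (simp add: dist_commute)
next
  assume "\<forall>y r. D \<subseteq> cball y r \<longrightarrow> dist z y \<le> r"
  then have "\<forall>y r. D \<subseteq> cball y r \<longrightarrow> z \<in> cball y r" by (simp add: dist_commute)
  then show "z \<in> admissible_hull UNIV D" unfolding admissible_hull_def by blast
qed

lemma mk_phi:
  fixes A :: "'a::metric_space set" and g h :: "'a \<Rightarrow> 'b::metric_space"
  assumes A: "A \<noteq> {}" and g: "g \<in> nonexp_maps A UNIV"
  and hA: "\<forall>x\<in>A. h x = g x" and hn: "\<forall>x y. dist (h x) (h y) \<le> dist x y"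
  and hc: "\<forall>x y r. r \<ge> 0 \<and> g ` A \<subseteq> cball y r \<longrightarrow> dist (h x) y \<le> r"
  shows "h \<in> Phi_c UNIV A UNIV g"
proof -
  have hull: "\<forall>x y r. g ` A \<subseteq> cball y r \<longrightarrow> dist (h x) y \<le> r"
  proof (intro allI impI)
    fix x y r assume s: "g ` A \<subseteq> cball y r"
    from A obtain a where "a \<in> A" by blast
    with s have "r \<ge> 0" by (meson dist_not_less_zero image_eqI le_less_trans linorder_not_le mem_cball subsetD)
    with hc s show "dist (h x) y \<le> r" by simp
  qed
  from g have "bounded (g ` A)" unfolding nonexp_maps_def by blast
  then obtain r c where r: "g ` A \<subseteq> cball c r" unfolding bounded_subset_cball by blast
  have "h ` UNIV \<subseteq> cball c r" using hull r by (auto simp: dist_commute)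
  then have "bounded (h ` UNIV)" using bounded_cball bounded_subset by metis
  moreover have "h ` UNIV \<subseteq> admissible_hull UNIV (g ` A)"
  proof
    fix z assume "z \<in> h ` UNIV"
    then obtain x where "z = h x" by blast
    then show "z \<in> admissible_hull UNIV (g ` A)" unfolding hull_iff using hull by simp
  qed
  ultimately show ?thesis unfolding Phi_c_def nonexp_maps_def using hA hn by blast
qed


lemma cball_pair:
  fixes c c' :: "'b::metric_space"
  assumes "dist c z \<le> r" "dist c' z \<le> r'"
  shows "dist c c' \<le> r + r'"
  using assms by (smt (verit) dist_commute dist_triangle)

lemma pairI:
  fixes S :: "('b::metric_space \<times> real) set"
  assumes "\<And>c r c' r'. (c,r)\<in>S \<Longrightarrow> (c',r')\<in>S \<Longrightarrow> dist c c' \<le> r+r'"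
  shows "\<forall>(c,r)\<in>S. \<forall>(c',r')\<in>S. dist c c' \<le> r + r'"
  using assms by fast

lemma phi_nonempty:
  fixes A :: "'a::metric_space set" and f :: "'a \<Rightarrow> 'b::metric_space"
  assumes A: "A \<noteq> {}" and hc: "hyperconvex (UNIV::'b set)" and f: "f \<in> nonexp_maps A UNIV"
  shows "Phi_c UNIV A UNIV f \<noteq> {}"
proof -
  define B where "B = (\<lambda>x::'a. {(y,r). r \<ge> 0 \<and> f ` A \<subseteq> cball y r})"
  obtain a0 where a0: "a0 \<in> A" using A by blast
  have "\<exists>h. (\<forall>x\<in>A. h x = f x) \<and> (\<forall>x y. dist (h x) (h y) \<le> dist x y)
            \<and> (\<forall>x. \<forall>(c,r)\<in>B x. dist (h x) c \<le> r)"
  proof (rule ext[OF hc])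
    show "\<forall>x\<in>A. \<forall>y\<in>A. dist (f x) (f y) \<le> dist x y" using f unfolding nonexp_maps_def by blast
    show "\<forall>x. \<forall>(c,r)\<in>B x. r \<ge> 0" unfolding B_def by blast
    show "\<forall>x. \<forall>(c,r)\<in>B x. \<forall>(c',r')\<in>B x. dist c c' \<le> r + r'"
    proof (intro allI pairI)
      fix x c r c' r' assume p: "(c,r) \<in> B x" and q: "(c',r') \<in> B x"
      have "dist c (f a0) \<le> r" "dist c' (f a0) \<le> r'" using a0 p q unfolding B_def by auto
      then show "dist c c' \<le> r + r'" using cball_pair by blast
    qed
    show "\<forall>x a y. (\<forall>(c,r)\<in>B a. dist y c \<le> r) \<longrightarrow> (\<forall>(c,r)\<in>B x. dist y c \<le> dist x a + r)"
    proof (intro allI impI)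
      fix x a y assume H: "\<forall>(c,r)\<in>B a. dist y c \<le> r"
      show "\<forall>(c,r)\<in>B x. dist y c \<le> dist x a + r"
      proof
        fix p assume p: "p \<in> B x"
        then have "p \<in> B a" unfolding B_def by simp
        with H have "dist y (fst p) \<le> snd p" by (auto simp: case_prod_beta)
        then show "case p of (c,r) \<Rightarrow> dist y c \<le> dist x a + r"
          by (auto simp: case_prod_beta intro: add_increasing)
      qed
    qed
    show "\<forall>a\<in>A. \<forall>(c,r)\<in>B a. dist (f a) c \<le> r" unfolding B_def by (auto simp: dist_commute)
  qed
  then obtain h where h: "\<forall>x\<in>A. h x = f x" "\<forall>x y. dist (h x) (h y) \<le> dist x y"
            "\<forall>x. \<forall>(c,r)\<in>B x. dist (h x) c \<le> r" by blast
  have "\<forall>x y r. r \<ge> 0 \<and> f ` A \<subseteq> cball y r \<longrightarrow> dist (h x) y \<le> r"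
  proof (intro allI impI)
    fix x y r assume "r \<ge> 0 \<and> f ` A \<subseteq> cball y r"
    then have "(y,r) \<in> B x" unfolding B_def by simp
    with h(3) show "dist (h x) y \<le> r" by fastforce
  qed
  then have "h \<in> Phi_c UNIV A UNIV f" by (rule mk_phi[OF A f h(1) h(2)])
  then show ?thesis by blast
qed

lemma phi_near:
  fixes A :: "'a::metric_space set" and f g f' :: "'a \<Rightarrow> 'b::metric_space"
  assumes A: "A \<noteq> {}" and hc: "hyperconvex (UNIV::'b set)"
    and f: "f \<in> nonexp_maps A UNIV" and g: "g \<in> nonexp_maps A UNIV"
    and f': "f' \<in> Phi_c UNIV A UNIV f" and d0: "\<delta> \<ge> 0"
    and dfg: "\<forall>a\<in>A. dist (f a) (g a) \<le> \<delta>"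
  shows "\<exists>g'\<in>Phi_c UNIV A UNIV g. \<forall>x. dist (f' x) (g' x) \<le> \<delta>"
proof -
  have f'A: "\<forall>x\<in>A. f' x = f x" and f'n: "\<forall>x y. dist (f' x) (f' y) \<le> dist x y"
    and f'h: "\<forall>x. f' x \<in> admissible_hull UNIV (f ` A)"
    using f' unfolding Phi_c_def nonexp_maps_def by auto
  define C where "C = {(y,r). r \<ge> 0 \<and> g ` A \<subseteq> cball y r}"
  define B where "B = (\<lambda>x::'a. insert (f' x, \<delta>) C)"
  obtain a0 where a0: "a0 \<in> A" using A by blast
  have Cmem: "dist (g a) c \<le> r" if "(c,r) \<in> C" "a \<in> A" for c r a
    using that unfolding C_def by (auto simp: dist_commute)
  have fC: "dist (f' x) c \<le> \<delta> + r" if "(c,r) \<in> C" for x c r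
  proof -
    have "f ` A \<subseteq> cball c (r + \<delta>)"
    proof
      fix z assume "z \<in> f ` A"
      then obtain a where a: "a \<in> A" "z = f a" by blast
      have "dist c (f a) \<le> dist c (g a) + dist (g a) (f a)" by (rule dist_triangle)
      also have "\<dots> \<le> r + \<delta>" using Cmem[OF that a(1)] dfg a(1) by (simp add: dist_commute add_mono)
      finally show "z \<in> cball c (r + \<delta>)" using a by simp
    qed
    moreover have "f' x \<in> admissible_hull UNIV (f ` A)" using f'h by blast
    ultimately show ?thesis unfolding hull_iff by (simp add: add.commute)
  qed
  have "\<exists>h. (\<forall>x\<in>A. h x = g x) \<and> (\<forall>x y. dist (h x) (h y) \<le> dist x y)
            \<and> (\<forall>x. \<forall>(c,r)\<in>B x. dist (h x) c \<le> r)"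
  proof (rule ext[OF hc])
    show "\<forall>x\<in>A. \<forall>y\<in>A. dist (g x) (g y) \<le> dist x y" using g unfolding nonexp_maps_def by blast
    show "\<forall>x. \<forall>(c,r)\<in>B x. r \<ge> 0" unfolding B_def C_def using d0 by blast
    show "\<forall>x. \<forall>(c,r)\<in>B x. \<forall>(c',r')\<in>B x. dist c c' \<le> r + r'"
    proof (intro allI pairI)
      fix x c r c' r' assume p: "(c,r) \<in> B x" and q: "(c',r') \<in> B x"
      define p where "p = (c,r)"
      define q where "q = (c',r')"
      have pq: "p = (c,r)" "q = (c',r')" using p_def q_def by auto
      show "dist c c' \<le> r + r'"
      proof (cases "p = (f' x, \<delta>)")
        case True note T = True
        show ?thesis
        proof (cases "q = (f' x, \<delta>)")
          case True then show ?thesis using T pq d0 by simp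
        next
          case False then have "(c',r') \<in> C" using q pq unfolding B_def by auto
          then show ?thesis using fC T pq by simp
        qed
      next
        case False then have cC: "(c,r) \<in> C" using p pq unfolding B_def by auto
        show ?thesis
        proof (cases "q = (f' x, \<delta>)")
          case True then show ?thesis using fC[OF cC, of x] pq by (simp add: dist_commute add.commute)
        next
          case False then have "(c',r') \<in> C" using q pq unfolding B_def by auto
          then have "dist c' (g a0) \<le> r'" using Cmem a0 by (simp add: dist_commute)
          moreover have "dist c (g a0) \<le> r" using Cmem[OF cC a0] by (simp add: dist_commute)
          ultimately show ?thesis using cball_pair by blast
        qed
      qed
    qed
    show "\<forall>x a y. (\<forall>(c,r)\<in>B a. dist y c \<le> r) \<longrightarrow> (\<forall>(c,r)\<in>B x. dist y c \<le> dist x a + r)"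
    proof (intro allI impI)
      fix x a y assume H: "\<forall>(c,r)\<in>B a. dist y c \<le> r"
      show "\<forall>(c,r)\<in>B x. dist y c \<le> dist x a + r"
      proof
        fix p assume p: "p \<in> B x"
        show "case p of (c,r) \<Rightarrow> dist y c \<le> dist x a + r"
        proof (cases "p = (f' x, \<delta>)")
          case True
          have "dist y (f' a) \<le> \<delta>" using H unfolding B_def by simp
          moreover have "dist (f' a) (f' x) \<le> dist x a" using f'n by (simp add: dist_commute)
          ultimately have "dist y (f' x) \<le> dist x a + \<delta>"
            by (smt (verit) dist_triangle)
          then show ?thesis using True by simp
        next
          case False
          then have "p \<in> C" using p unfolding B_def by simp
          then have "p \<in> B a" unfolding B_def by simp
          with H have "dist y (fst p) \<le> snd p" by (auto simp: case_prod_beta)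
          then show ?thesis by (auto simp: case_prod_beta intro: add_increasing)
        qed
      qed
    qed
    show "\<forall>a\<in>A. \<forall>(c,r)\<in>B a. dist (g a) c \<le> r"
    proof (intro ballI)
      fix a p assume a: "a \<in> A" and p: "p \<in> B a"
      show "case p of (c,r) \<Rightarrow> dist (g a) c \<le> r"
      proof (cases "p = (f' a, \<delta>)")
        case True then show ?thesis using dfg a f'A by (simp add: dist_commute)
      next
        case False then have "p \<in> C" using p unfolding B_def by simp
        then show ?thesis using Cmem a by (auto simp: case_prod_beta)
      qed
    qed
  qed
  then obtain h where h: "\<forall>x\<in>A. h x = g x" "\<forall>x y. dist (h x) (h y) \<le> dist x y"
            "\<forall>x. \<forall>(c,r)\<in>B x. dist (h x) c \<le> r" by blast
  have "\<forall>x y r. r \<ge> 0 \<and> g ` A \<subseteq> cball y r \<longrightarrow> dist (h x) y \<le> r"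
  proof (intro allI impI)
    fix x y r assume "r \<ge> 0 \<and> g ` A \<subseteq> cball y r"
    then have "(y,r) \<in> B x" unfolding B_def C_def by simp
    with h(3) show "dist (h x) y \<le> r" by fastforce
  qed
  then have hP: "h \<in> Phi_c UNIV A UNIV g" by (rule mk_phi[OF A g h(1) h(2)])
  have "\<forall>x. dist (f' x) (h x) \<le> \<delta>"
  proof
    fix x have "(f' x, \<delta>) \<in> B x" unfolding B_def by simp
    with h(3) show "dist (f' x) (h x) \<le> \<delta>" by (fastforce simp: dist_commute)
  qed
  with hP show ?thesis by blast
qed


lemma sup_bound:
  fixes A :: "'a::metric_space set" and f g :: "'a \<Rightarrow> 'b::metric_space"
  assumes A: "A \<noteq> {}" and f: "f \<in> nonexp_maps A UNIV" and g: "g \<in> nonexp_maps A UNIV"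
  shows "\<forall>a\<in>A. dist (f a) (g a) \<le> sup_dist A f g" "sup_dist A f g \<ge> 0"
proof -
  from f have "bounded (f ` A)" unfolding nonexp_maps_def by blast
  then obtain r1 c1 where r1: "f ` A \<subseteq> cball c1 r1" unfolding bounded_subset_cball by blast
  from g have "bounded (g ` A)" unfolding nonexp_maps_def by blast
  then obtain r2 c2 where r2: "g ` A \<subseteq> cball c2 r2" unfolding bounded_subset_cball by blast
  have bd: "dist (f a) (g a) \<le> r1 + dist c1 c2 + r2" if "a \<in> A" for a
  proof -
    have "dist c1 (f a) \<le> r1" "dist c2 (g a) \<le> r2" using r1 r2 that by auto
    then show ?thesis by (smt (verit) dist_commute dist_triangle)
  qed
  have bdd: "bdd_above ((\<lambda>a. dist (f a) (g a)) ` A)" using bd by (intro bdd_aboveI2) auto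
  show c1: "\<forall>a\<in>A. dist (f a) (g a) \<le> sup_dist A f g"
    unfolding sup_dist_def using bdd by (auto intro: cSUP_upper)
  obtain a0 where "a0 \<in> A" using A by blast
  with c1 show "sup_dist A f g \<ge> 0" by (meson order_trans zero_le_dist)
qed

lemma sup_dist_le:
  assumes "\<forall>x. dist (p x) (q x) \<le> (d::real)"
  shows "sup_dist UNIV p q \<le> d"
  unfolding sup_dist_def using assms by (intro cSUP_least) auto

theorem lemma5p11:
  fixes A :: "'a::metric_space set"
  assumes "A \<noteq> {}"
    and "hyperconvex (UNIV :: 'b::metric_space set)"
  shows "\<forall>f\<in>nonexp_maps A (UNIV :: 'b set). \<forall>g\<in>nonexp_maps A (UNIV :: 'b set).
           Phi_c UNIV A UNIV f \<noteq> {} \<and>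
           haus_dist UNIV (Phi_c UNIV A UNIV f) (Phi_c UNIV A UNIV g) \<le> ereal (sup_dist A f g)"
proof (intro ballI conjI)
  fix f g :: "'a \<Rightarrow> 'b" assume f: "f \<in> nonexp_maps A UNIV" and g: "g \<in> nonexp_maps A UNIV"
  show "Phi_c UNIV A UNIV f \<noteq> {}" by (rule phi_nonempty[OF assms(1,2) f])
  define d where "d = sup_dist A f g"
  have dfg: "\<forall>a\<in>A. dist (f a) (g a) \<le> d" "d \<ge> 0" using sup_bound[OF assms(1) f g] d_def by auto
  have dgf: "\<forall>a\<in>A. dist (g a) (f a) \<le> d" using dfg by (simp add: dist_commute)
  have s1: "(SUP p\<in>Phi_c UNIV A UNIV f. INF q\<in>Phi_c UNIV A UNIV g. ereal (sup_dist UNIV p q)) \<le> ereal d"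
  proof (rule SUP_least)
    fix p assume p: "p \<in> Phi_c UNIV A UNIV f"
    obtain q where q: "q \<in> Phi_c UNIV A UNIV g" "\<forall>x. dist (p x) (q x) \<le> d"
      using phi_near[OF assms(1,2) f g p dfg(2) dfg(1)] by blast
    have "sup_dist UNIV p q \<le> d" by (rule sup_dist_le[OF q(2)])
    then show "(INF q\<in>Phi_c UNIV A UNIV g. ereal (sup_dist UNIV p q)) \<le> ereal d"
      using q(1) by (intro INF_lower2[of q]) auto
  qed
  have s2: "(SUP q\<in>Phi_c UNIV A UNIV g. INF p\<in>Phi_c UNIV A UNIV f. ereal (sup_dist UNIV p q)) \<le> ereal d"
  proof (rule SUP_least)
    fix q assume q: "q \<in> Phi_c UNIV A UNIV g"
    obtain p where p: "p \<in> Phi_c UNIV A UNIV f" "\<forall>x. dist (q x) (p x) \<le> d"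
      using phi_near[OF assms(1,2) g f q dfg(2) dgf] by blast
    have "\<forall>x. dist (p x) (q x) \<le> d" using p(2) by (simp add: dist_commute)
    then have "sup_dist UNIV p q \<le> d" by (rule sup_dist_le)
    then show "(INF p\<in>Phi_c UNIV A UNIV f. ereal (sup_dist UNIV p q)) \<le> ereal d"
      using p(1) by (intro INF_lower2[of p]) auto
  qed
  show "haus_dist UNIV (Phi_c UNIV A UNIV f) (Phi_c UNIV A UNIV g) \<le> ereal (sup_dist A f g)"
    unfolding haus_dist_def d_def[symmetric] using s1 s2 by simp
qed

end
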